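(* If a triangle-free oriented graph $G$ has a cut vertex, then either $G$ has a full in-star cutset, or $G$ has a vertex of degree at most $1$.
   Context: Oriented graphs are finite, without loops, multiple arcs or pairs of opposite arcs; triangle-free, cut vertex, degree and connectivity refer to the underlying graph (a cut vertex is a vertex whose removal increases the number of connected components). $N^-[v]$ is $v$ together with its in-neighbors. A full in-star cutset of $G$ is a set $N^-[v]$, for some vertex $v$, such that $G\setminus N^-[v]$ is disconnected. *)

theory Defs
  imports Main
begin

text \<open>An oriented graph: finite vertex set V, arc set A \<subseteq> V \<times> V, no loops,
  no pair of opposite arcs (multiple arcs are impossible since A is a set).\<close>
definition oriented_graph :: "'a set \<Rightarrow> ('a \<times> 'a) set \<Rightarrow> bool" where
  "oriented_graph V A \<longleftrightarrow> finite V \<and> A \<subseteq> V \<times> V \<and>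
     (\<forall>v. (v, v) \<notin> A) \<and> (\<forall>u v. (u, v) \<in> A \<longrightarrow> (v, u) \<notin> A)"

definition adj :: "('a \<times> 'a) set \<Rightarrow> 'a \<Rightarrow> 'a \<Rightarrow> bool" where
  "adj A u v \<longleftrightarrow> (u, v) \<in> A \<or> (v, u) \<in> A"

definition triangle_free :: "'a set \<Rightarrow> ('a \<times> 'a) set \<Rightarrow> bool" where
  "triangle_free V A \<longleftrightarrow> \<not> (\<exists>x\<in>V. \<exists>y\<in>V. \<exists>z\<in>V. adj A x y \<and> adj A y z \<and> adj A x z)"

definition degree :: "'a set \<Rightarrow> ('a \<times> 'a) set \<Rightarrow> 'a \<Rightarrow> nat" where
  "degree V A v = card {u \<in> V. adj A u v}"

definition reach_in :: "'a set \<Rightarrow> ('a \<times> 'a) set \<Rightarrow> 'a \<Rightarrow> 'a \<Rightarrow> bool" where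
  "reach_in S A u v \<longleftrightarrow> u \<in> S \<and> v \<in> S \<and>
     (u, v) \<in> ({(x, y). x \<in> S \<and> y \<in> S \<and> adj A x y})\<^sup>*"

definition components :: "'a set \<Rightarrow> ('a \<times> 'a) set \<Rightarrow> 'a set set" where
  "components S A = {{v. reach_in S A u v} | u. u \<in> S}"

definition num_components :: "'a set \<Rightarrow> ('a \<times> 'a) set \<Rightarrow> nat" where
  "num_components S A = card (components S A)"

definition disconnected :: "'a set \<Rightarrow> ('a \<times> 'a) set \<Rightarrow> bool" where
  "disconnected S A \<longleftrightarrow> num_components S A \<ge> 2"

definition cut_vertex :: "'a set \<Rightarrow> ('a \<times> 'a) set \<Rightarrow> 'a \<Rightarrow> bool" where
  "cut_vertex V A v \<longleftrightarrow> v \<in> V \<and> num_components (V - {v}) A > num_components V A"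

definition closed_in_nbhd :: "'a set \<Rightarrow> ('a \<times> 'a) set \<Rightarrow> 'a \<Rightarrow> 'a set" where
  "closed_in_nbhd V A v = insert v {u \<in> V. (u, v) \<in> A}"

definition has_full_in_star_cutset :: "'a set \<Rightarrow> ('a \<times> 'a) set \<Rightarrow> bool" where
  "has_full_in_star_cutset V A \<longleftrightarrow>
     (\<exists>v\<in>V. disconnected (V - closed_in_nbhd V A v) A)"

end

theory Submission
  imports Defs
begin

lemma reach_refl: "u \<in> S \<Longrightarrow> reach_in S A u u"
  by (simp add: reach_in_def)

lemma reach_step: "u \<in> S \<Longrightarrow> w \<in> S \<Longrightarrow> adj A u w \<Longrightarrow> reach_in S A u w"
  by (auto simp: reach_in_def)

lemma reach_sym: assumes "reach_in S A u w" shows "reach_in S A w u"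
proof -
  let ?R = "{(x, y). x \<in> S \<and> y \<in> S \<and> adj A x y}"
  have c: "?R\<inverse> = ?R" by (auto simp: adj_def)
  have "(u, w) \<in> ?R\<^sup>*" using assms by (simp add: reach_in_def)
  then have "(w, u) \<in> (?R\<inverse>)\<^sup>*" by (simp add: rtrancl_converseI)
  then show ?thesis using assms c by (simp add: reach_in_def)
qed

lemma reach_trans: "reach_in S A u w \<Longrightarrow> reach_in S A w x \<Longrightarrow> reach_in S A u x"
  unfolding reach_in_def by (meson rtrancl_trans)

lemma reach_mono: assumes "S \<subseteq> T" "reach_in S A u w" shows "reach_in T A u w"
proof -
  have "{(x, y). x \<in> S \<and> y \<in> S \<and> adj A x y} \<subseteq> {(x, y). x \<in> T \<and> y \<in> T \<and> adj A x y}"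
    using assms(1) by auto
  then show ?thesis using assms unfolding reach_in_def by (meson rtrancl_mono subsetD)
qed

lemma comp_le1:
  assumes "\<forall>u\<in>S. \<forall>w\<in>S. reach_in S A u w"
  shows "num_components S A \<le> 1"
proof (cases "S = {}")
  case True then show ?thesis by (simp add: num_components_def components_def)
next
  case False
  then obtain u0 where u0: "u0 \<in> S" by blast
  have "components S A \<subseteq> {{w. reach_in S A u0 w}}"
  proof
    fix X assume "X \<in> components S A"
    then obtain u where u: "u \<in> S" "X = {w. reach_in S A u w}" by (auto simp: components_def)
    have "{w. reach_in S A u w} = {w. reach_in S A u0 w}"
      using assms u u0 by (meson reach_trans)
    then show "X \<in> {{w. reach_in S A u0 w}}" using u by simp
  qed
  then have "card (components S A) \<le> card {{w. reach_in S A u0 w}}"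
    by (intro card_mono) auto
  then show ?thesis by (simp add: num_components_def)
qed

lemma comp_finite: "finite S \<Longrightarrow> finite (components S A)"
proof -
  assume "finite S"
  have "components S A = (\<lambda>u. {w. reach_in S A u w}) ` S" unfolding components_def by blast
  then show ?thesis using \<open>finite S\<close> by simp
qed

lemma comp_reach:
  assumes "finite S" "num_components S A \<le> 1" "u \<in> S" "w \<in> S"
  shows "reach_in S A u w"
proof -
  have f: "finite (components S A)" using assms(1) by (rule comp_finite)
  have cu: "{x. reach_in S A u x} \<in> components S A" using assms(3) unfolding components_def by blast
  have cw: "{x. reach_in S A w x} \<in> components S A" using assms(4) unfolding components_def by blast
  have "card (components S A) \<le> Suc 0" using assms(2) by (simp add: num_components_def)
  then have "{x. reach_in S A u x} = {x. reach_in S A w x}"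
    using card_le_Suc0_iff_eq[OF f] cu cw by simp
  moreover have "w \<in> {x. reach_in S A w x}" using assms(4) reach_refl by fastforce
  ultimately have "w \<in> {x. reach_in S A u x}" by simp
  then show ?thesis by simp
qed

lemma comp_ge1:
  assumes "finite V" "v \<in> V" shows "num_components V A \<ge> 1"
proof -
  have "{x. reach_in V A v x} \<in> components V A" using assms(2) unfolding components_def by blast
  then have "components V A \<noteq> {}" by blast
  then show ?thesis using comp_finite[OF assms(1)] by (simp add: num_components_def Suc_le_eq card_gt_0_iff)
qed

theorem lemma5p4:
  assumes "oriented_graph V A"
    and "triangle_free V A"
    and "\<exists>v. cut_vertex V A v"
  shows "has_full_in_star_cutset V A \<or> (\<exists>v\<in>V. degree V A v \<le> 1)"
proof (rule ccontr)
  assume H: "\<not> (has_full_in_star_cutset V A \<or> (\<exists>v\<in>V. degree V A v \<le> 1))"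
  obtain v where cv: "cut_vertex V A v" using assms(3) by blast
  have vV: "v \<in> V" using cv by (simp add: cut_vertex_def)
  have fin: "finite V" using assms(1) by (simp add: oriented_graph_def)
  have AV: "A \<subseteq> V \<times> V" using assms(1) by (simp add: oriented_graph_def)
  have noloop: "\<And>x. (x, x) \<notin> A" using assms(1) by (simp add: oriented_graph_def)
  define S where "S = V - closed_in_nbhd V A v"
  define T where "T = V - {v}"
  have ST: "S \<subseteq> T" by (auto simp: S_def T_def closed_in_nbhd_def)
  have finS: "finite S" using fin by (simp add: S_def)
  have Sc: "num_components S A \<le> 1"
  proof -
    have "\<not> disconnected S A" using H vV unfolding has_full_in_star_cutset_def S_def by blast
    then show ?thesis unfolding disconnected_def by simp
  qed
  have deg: "\<And>u. u \<in> V \<Longrightarrow> degree V A u > 1" using H by (simp add: not_le)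
  have meet: "\<exists>s\<in>S. reach_in T A u s" if uT: "u \<in> T" for u
  proof (rule ccontr)
    assume N: "\<not> (\<exists>s\<in>S. reach_in T A u s)"
    have inA: "(w, v) \<in> A" if "reach_in T A u w" for w
    proof -
      have "w \<in> T" using that by (simp add: reach_in_def)
      moreover have "w \<notin> S" using N that by blast
      ultimately show ?thesis by (auto simp: S_def T_def closed_in_nbhd_def)
    qed
    have uv: "(u, v) \<in> A" using inA reach_refl[OF uT] by blast
    have "{x \<in> V. adj A x u} \<subseteq> {v}"
    proof
      fix x assume x: "x \<in> {x \<in> V. adj A x u}"
      show "x \<in> {v}"
      proof (rule ccontr)
        assume "x \<notin> {v}"
        then have xT: "x \<in> T" using x by (simp add: T_def)
        have "reach_in T A u x" using reach_step[OF uT xT] x by (auto simp: adj_def)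
        then have "(x, v) \<in> A" by (rule inA)
        moreover have "x \<in> V" "u \<in> V" using x uT by (auto simp: T_def)
        ultimately have "\<exists>a\<in>V. \<exists>b\<in>V. \<exists>c\<in>V. adj A a b \<and> adj A b c \<and> adj A a c"
          using x uv vV by (intro bexI[of _ x] bexI[of _ u] bexI[of _ v]) (auto simp: adj_def)
        then show False using assms(2) unfolding triangle_free_def by blast
      qed
    qed
    then have "degree V A u \<le> card {v}" unfolding degree_def by (intro card_mono) auto
    then show False using deg[of u] uT by (simp add: T_def)
  qed
  have "\<forall>u\<in>T. \<forall>w\<in>T. reach_in T A u w"
  proof (intro ballI)
    fix u w assume u: "u \<in> T" and w: "w \<in> T"
    obtain s1 where s1: "s1 \<in> S" "reach_in T A u s1" using meet[OF u] by blast
    obtain s2 where s2: "s2 \<in> S" "reach_in T A w s2" using meet[OF w] by blast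
    have "reach_in T A s1 s2" using reach_mono[OF ST comp_reach[OF finS Sc s1(1) s2(1)]] .
    then show "reach_in T A u w" using reach_trans[OF reach_trans[OF s1(2)] reach_sym[OF s2(2)]] by blast
  qed
  then have "num_components T A \<le> 1" by (rule comp_le1)
  moreover have "num_components V A \<ge> 1" using comp_ge1[OF fin vV] .
  ultimately show False using cv by (simp add: cut_vertex_def T_def)
qed

end
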